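(* For all positive integers $m$, all real numbers $x_1,\dots,x_m,y_1,\dots,y_m\ge0$ and all real $d>1$, \[\max_{j\in\{1,\dots,m\}}\Big((d-1)x_j^{1/(d-1)}+\sum_{i=1}^j y_i\Big)\ \ge\ d\Big(\frac{1}{\mathrm{e}}\sum_{j=1}^m x_jy_j\Big)^{1/d}.\] *)

theory Defs
  imports "HOL-Analysis.Analysis"
begin

end

theory Submission
  imports Defs
begin

lemma key_ineq:
  fixes a b d :: real
  assumes "d > 1" "a \<ge> 0" "b \<ge> 0"
  shows "d * b * a powr (d - 1) \<le> b powr d + (d - 1) * a powr d"
proof -
  have q: "d / (d - 1) > 1" using assms by (simp add: field_simps)
  have s: "1 / d + 1 / (d / (d - 1)) = 1" using assms by (simp add: field_simps)
  have "b * a powr (d - 1) \<le> b powr d / d + (a powr (d - 1)) powr (d / (d - 1)) / (d / (d - 1))"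
    using Youngs_inequality[OF assms(1) q s assms(3)] assms by simp
  also have "(a powr (d - 1)) powr (d / (d - 1)) = a powr d"
    using assms by (simp add: powr_powr)
  finally have "b * a powr (d - 1) \<le> b powr d / d + a powr d * (d - 1) / d"
    by simp
  then have "d * (b * a powr (d - 1)) \<le> d * (b powr d / d + a powr d * (d - 1) / d)"
    using assms by (intro mult_left_mono) auto
  also have "\<dots> = b powr d + (d - 1) * a powr d" using assms by (simp add: field_simps)
  finally show ?thesis by (simp add: mult.assoc)
qed

lemma telescope:
  fixes g :: "nat \<Rightarrow> real"
  shows "(\<Sum>j=1..m. g (j - 1) - g j) = g 0 - g m"
  by (induction m) auto

lemma e_bound:
  fixes d :: real
  assumes "d > 1"
  shows "(d / (d - 1)) powr (d - 1) \<le> exp 1"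
proof -
  have "ln (d / (d - 1)) \<le> d / (d - 1) - 1"
    using assms by (intro ln_le_minus_one) auto
  also have "\<dots> = 1 / (d - 1)" using assms by (simp add: field_simps)
  finally have "(d - 1) * ln (d / (d - 1)) \<le> 1"
    using assms by (simp add: field_simps)
  then have "exp ((d - 1) * ln (d / (d - 1))) \<le> exp 1" by simp
  then show ?thesis using assms by (simp add: powr_def)
qed

theorem lemma3p9:
  fixes m :: nat and x y :: "nat \<Rightarrow> real" and d :: real
  assumes "m \<ge> 1"
    and "\<And>i. i \<in> {1..m} \<Longrightarrow> x i \<ge> 0"
    and "\<And>i. i \<in> {1..m} \<Longrightarrow> y i \<ge> 0"
    and "d > 1"
  shows "(MAX j\<in>{1..m}. (d - 1) * x j powr (1 / (d - 1)) + (\<Sum>i=1..j. y i))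
           \<ge> d * ((1 / exp 1) * (\<Sum>j=1..m. x j * y j)) powr (1 / d)"
proof -
  define M where "M = (MAX j\<in>{1..m}. (d - 1) * x j powr (1 / (d - 1)) + (\<Sum>i=1..j. y i))"
  define a where "a j = M - (\<Sum>i=1..j. y i)" for j
  define S where "S = (\<Sum>j=1..m. x j * y j)"
  have d1: "d - 1 > 0" using assms by simp
  have geM: "(d - 1) * x j powr (1 / (d - 1)) + (\<Sum>i=1..j. y i) \<le> M" if "j \<in> {1..m}" for j
    unfolding M_def using that by (intro Max_ge) auto
  have a_nonneg: "a j \<ge> 0" if "j \<in> {1..m}" for j
  proof -
    have "0 \<le> (d - 1) * x j powr (1 / (d - 1))" using d1 by simp
    then show ?thesis using geM[OF that] unfolding a_def by linarith
  qed
  have a0: "a 0 = M" unfolding a_def by simp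
  have aprev: "a (j - 1) = a j + y j" if "j \<ge> 1" for j
  proof -
    have "{1..j} = insert j {1..j-1}" using that by auto
    then have "(\<Sum>i=1..j. y i) = y j + (\<Sum>i=1..j-1. y i)" using that by simp
    then show ?thesis unfolding a_def by simp
  qed
  have step: "x j * y j \<le> (a (j - 1) powr d - a j powr d) / (d * (d - 1) powr (d - 1))"
    if j: "j \<in> {1..m}" for j
  proof -
    have xj: "x j \<ge> 0" "y j \<ge> 0" using assms(2,3) j by auto
    have "x j powr (1 / (d - 1)) \<le> a j / (d - 1)"
      using geM[OF j] d1 unfolding a_def by (simp add: field_simps)
    then have "(x j powr (1 / (d - 1))) powr (d - 1) \<le> (a j / (d - 1)) powr (d - 1)"
      using d1 by (intro powr_mono2) auto
    also have "(x j powr (1 / (d - 1))) powr (d - 1) = x j"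
      using d1 xj by (simp add: powr_powr)
    also have "(a j / (d - 1)) powr (d - 1) = a j powr (d - 1) / (d - 1) powr (d - 1)"
      using d1 a_nonneg[OF j] by (simp add: powr_divide)
    finally have xb: "x j \<le> a j powr (d - 1) / (d - 1) powr (d - 1)" .
    have "x j * y j \<le> a j powr (d - 1) / (d - 1) powr (d - 1) * y j"
      using xb xj by (intro mult_right_mono) auto
    also have "\<dots> = (d * y j * a j powr (d - 1)) / (d * (d - 1) powr (d - 1))"
      using assms(4) by (simp add: field_simps)
    also have "\<dots> \<le> (a (j - 1) powr d - a j powr d) / (d * (d - 1) powr (d - 1))"
    proof (rule divide_right_mono)
      have "d * (a j + y j) * a j powr (d - 1) \<le> (a j + y j) powr d + (d - 1) * a j powr d"
        using key_ineq[OF assms(4) a_nonneg[OF j], of "a j + y j"] a_nonneg[OF j] xj by simp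
      moreover have "a j powr (d - 1) * a j = a j powr d"
        using a_nonneg[OF j] d1 powr_add[of "a j" "d - 1" 1] by simp
      ultimately have "d * y j * a j powr (d - 1) \<le> (a j + y j) powr d - a j powr d"
        by (simp add: algebra_simps)
      then show "d * y j * a j powr (d - 1) \<le> a (j - 1) powr d - a j powr d"
        using aprev j by simp
      show "0 \<le> d * (d - 1) powr (d - 1)" using d1 by simp
    qed
    finally show ?thesis .
  qed
  have "S \<le> (\<Sum>j=1..m. (a (j - 1) powr d - a j powr d) / (d * (d - 1) powr (d - 1)))"
    unfolding S_def by (intro sum_mono step)
  also have "\<dots> = (\<Sum>j=1..m. a (j - 1) powr d - a j powr d) / (d * (d - 1) powr (d - 1))"
    by (simp add: sum_divide_distrib)
  also have "\<dots> = (M powr d - a m powr d) / (d * (d - 1) powr (d - 1))"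
    using telescope[of "\<lambda>j. a j powr d" m] a0 by simp
  also have "\<dots> \<le> M powr d / (d * (d - 1) powr (d - 1))"
    using d1 by (intro divide_right_mono) auto
  finally have SM: "S \<le> M powr d / (d * (d - 1) powr (d - 1))" .
  have M0: "M \<ge> 0" using a_nonneg[of m] assms(1) assms(3) unfolding a_def
    by (smt (verit, best) atLeastAtMost_iff order_refl sum_nonneg)
  have S0: "S \<ge> 0" unfolding S_def using assms(2,3) by (intro sum_nonneg) auto
  have "M powr d / (d * (d - 1) powr (d - 1)) = (M / d) powr d * ((d / (d - 1)) powr (d - 1))"
  proof -
    have "d powr d = d * d powr (d - 1)" using assms(4) powr_add[of d 1 "d - 1"] by simp
    then show ?thesis using assms(4) d1 M0
      by (simp add: powr_divide field_simps)
  qed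
  also have "\<dots> \<le> (M / d) powr d * exp 1"
    using e_bound[OF assms(4)] by (intro mult_left_mono) auto
  finally have "S / exp 1 \<le> (M / d) powr d" using SM by (simp add: field_simps)
  then have "(S / exp 1) powr (1 / d) \<le> ((M / d) powr d) powr (1 / d)"
    using S0 assms(4) by (intro powr_mono2) auto
  also have "\<dots> = M / d" using M0 assms(4) by (simp add: powr_powr)
  finally have "d * (S / exp 1) powr (1 / d) \<le> M" using assms(4) by (simp add: field_simps)
  then show ?thesis unfolding M_def S_def by simp
qed

end
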